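(* If $\gamma\in\Gamma\cap\mathcal{I}_\Gamma$ (i.e. $\gamma\in\Gamma$ with $\gamma^\dagger=\gamma$), then the complete geodesic hyperplane perpendicularly bisecting the geodesic segment from $1$ to $\mu_\Gamma(\gamma,1)$ does so at the point $\gamma$, so that $\gamma$ is the closest point to $1$ on this hyperplane.
   Context: $X$ is a Macfarlane complete orientable finite-volume hyperbolic 3-manifold, and the Kleinian group $\Gamma\cong\pi_1(X)$ is chosen so that its quaternion algebra (the $K$-span of the preimage of $\Gamma$ in $\mathrm{SL}_2(\mathbb{C})$, $K$ the trace field) is $\mathcal{B}=\big(\frac{a,b}{F(\sqrt{-d})}\big)$ with $i^2=a$, $j^2=b$, $ij=-ji$, where $F\subset\mathbb{R}$ and $a,b,d\in F$ are positive; $\Gamma$ is identified with its image in $\mathcal{B}^1/\{\pm1\}$. The involution is $(w+xi+yj+zij)^\dagger=\overline{w}+\overline{x}i+\overline{y}j-\overline{z}ij$; $\mathcal{M}=\{q:q^\dagger=q\}=F\oplus Fi\oplus Fj\oplus\sqrt{-d}Fij$, and $\mathcal{I}_\Gamma=\{p\in\mathcal{M}:\mathrm{tr}(p)>0,\ \mathrm{n}(p)=1\}$ (reduced trace and norm), a hyperboloid model on which $\Gamma$ acts faithfully by hyperbolic isometries via $\mu_\Gamma(\gamma,p)=\gamma p\gamma^\dagger$. *)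

theory Defs
  imports Complex_Main
begin

text \<open>Quaternion algebra (a,b / K) with K = F(sqrt(-d)) a subfield of the complex
numbers (F a subfield of the reals).  An element w + x i + y j + z ij is represented
by its four coordinates; coordinates are complex so that the real points
(B tensor_F R) are available for the hyperboloid model.\<close>

datatype quat = Quat (qw: complex) (qx: complex) (qy: complex) (qz: complex)

definition qone :: quat where "qone = Quat 1 0 0 0"

text \<open>Multiplication with i^2 = a, j^2 = b, ij = -ji.\<close>
definition qmul :: "real \<Rightarrow> real \<Rightarrow> quat \<Rightarrow> quat \<Rightarrow> quat" where
  "qmul a b p q =
     Quat (qw p * qw q + of_real a * qx p * qx q + of_real b * qy p * qy q
             - of_real (a * b) * qz p * qz q)
          (qw p * qx q + qx p * qw q - of_real b * qy p * qz q + of_real b * qz p * qy q)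
          (qw p * qy q + qy p * qw q + of_real a * qx p * qz q - of_real a * qz p * qx q)
          (qw p * qz q + qz p * qw q + qx p * qy q - qy p * qx q)"

definition qconj :: "quat \<Rightarrow> quat" where
  "qconj q = Quat (qw q) (- qx q) (- qy q) (- qz q)"

definition qdag :: "quat \<Rightarrow> quat" where
  "qdag q = Quat (cnj (qw q)) (cnj (qx q)) (cnj (qy q)) (- cnj (qz q))"

definition qtr :: "quat \<Rightarrow> complex" where
  "qtr q = 2 * qw q"

definition qnrm :: "real \<Rightarrow> real \<Rightarrow> quat \<Rightarrow> complex" where
  "qnrm a b q = qw q ^ 2 - of_real a * qx q ^ 2 - of_real b * qy q ^ 2
                 + of_real (a * b) * qz q ^ 2"

definition real_subfield :: "real set \<Rightarrow> bool" where
  "real_subfield F \<longleftrightarrow> 0 \<in> F \<and> 1 \<in> F \<and>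
     (\<forall>x\<in>F. \<forall>y\<in>F. x + y \<in> F \<and> x - y \<in> F \<and> x * y \<in> F) \<and>
     (\<forall>x\<in>F. x \<noteq> 0 \<longrightarrow> inverse x \<in> F)"

text \<open>K = F(sqrt(-d)), with sqrt(-d) = i * sqrt d inside the complex numbers.\<close>
definition trace_field :: "real set \<Rightarrow> real \<Rightarrow> complex set" where
  "trace_field F d = {of_real u + of_real v * \<i> * of_real (sqrt d) | u v. u \<in> F \<and> v \<in> F}"

definition quat_alg :: "real set \<Rightarrow> real \<Rightarrow> quat set" where
  "quat_alg F d = {q. qw q \<in> trace_field F d \<and> qx q \<in> trace_field F d \<and>
                      qy q \<in> trace_field F d \<and> qz q \<in> trace_field F d}"

definition quat_alg1 :: "real set \<Rightarrow> real \<Rightarrow> real \<Rightarrow> real \<Rightarrow> quat set" where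
  "quat_alg1 F a b d = {q \<in> quat_alg F d. qnrm a b q = 1}"

definition hyperboloid :: "real \<Rightarrow> real \<Rightarrow> quat set" where
  "hyperboloid a b = {p. qdag p = p \<and> Re (qtr p) > 0 \<and> qnrm a b p = 1}"

definition qact :: "real \<Rightarrow> real \<Rightarrow> quat \<Rightarrow> quat \<Rightarrow> quat" where
  "qact a b g p = qmul a b (qmul a b g p) (qdag g)"

definition qform :: "real \<Rightarrow> real \<Rightarrow> quat \<Rightarrow> quat \<Rightarrow> complex" where
  "qform a b p q = qtr (qmul a b p (qconj q)) / 2"

definition hdist :: "real \<Rightarrow> real \<Rightarrow> quat \<Rightarrow> quat \<Rightarrow> real" where
  "hdist a b p q = arcosh (Re (qform a b p q))"

definition geod_segment :: "real \<Rightarrow> real \<Rightarrow> quat \<Rightarrow> quat \<Rightarrow> quat set" where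
  "geod_segment a b P Q =
     {p \<in> hyperboloid a b. hdist a b P p + hdist a b p Q = hdist a b P Q}"

definition perp_bisector :: "real \<Rightarrow> real \<Rightarrow> quat \<Rightarrow> quat \<Rightarrow> quat set" where
  "perp_bisector a b P Q = {p \<in> hyperboloid a b. hdist a b p P = hdist a b p Q}"

end

theory Submission
  imports Defs
begin


definition mk :: "real \<Rightarrow> real \<Rightarrow> real \<Rightarrow> real \<Rightarrow> quat" where
  "mk p0 p1 p2 p3 = Quat (of_real p0) (of_real p1) (of_real p2) (\<i> * of_real p3)"

lemma hyp_rep:
  assumes "p \<in> hyperboloid a b"
  shows "p = mk (Re (qw p)) (Re (qx p)) (Re (qy p)) (Im (qz p))"
    "Re (qw p) > 0"
    "Re (qw p)^2 - a * Re (qx p)^2 - b * Re (qy p)^2 - a * b * Im (qz p)^2 = 1"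
proof -
  have d: "qdag p = p" and t: "Re (qtr p) > 0" and n: "qnrm a b p = 1"
    using assms by (auto simp: hyperboloid_def)
  from d have c: "cnj (qw p) = qw p" "cnj (qx p) = qx p" "cnj (qy p) = qy p" "- cnj (qz p) = qz p"
    by (cases p; simp add: qdag_def)+
  have i: "Im (qw p) = 0" "Im (qx p) = 0" "Im (qy p) = 0" "Re (qz p) = 0"
    using c by (simp_all add: complex_eq_iff)
  show e: "p = mk (Re (qw p)) (Re (qx p)) (Re (qy p)) (Im (qz p))"
    using i by (cases p) (simp add: mk_def complex_eq_iff)
  show "Re (qw p) > 0" using t by (simp add: qtr_def)
  have "Re (qnrm a b p) = 1" using n by simp
  then show "Re (qw p)^2 - a * Re (qx p)^2 - b * Re (qy p)^2 - a * b * Im (qz p)^2 = 1"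
    using i by (simp add: qnrm_def power2_eq_square)
qed

lemma form_mk: "Re (qform a b (mk u0 u1 u2 u3) (mk v0 v1 v2 v3)) = u0*v0 - a*u1*v1 - b*u2*v2 - a*b*u3*v3"
  by (simp add: qform_def qmul_def qconj_def qtr_def mk_def)

lemma sq_mk: "qmul a b (mk g0 g1 g2 g3) (mk g0 g1 g2 g3) = mk (g0^2 + a*g1^2 + b*g2^2 + a*b*g3^2) (2*g0*g1) (2*g0*g2) (2*g0*g3)"
  by (simp add: qmul_def mk_def power2_eq_square complex_eq_iff algebra_simps)

lemma dag_mk: "qdag (mk g0 g1 g2 g3) = mk g0 g1 g2 g3"
  by (simp add: qdag_def mk_def)

lemma qone_mk: "qone = mk 1 0 0 0" by (simp add: qone_def mk_def)

lemma mul_one: "qmul a b x qone = x"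
  by (cases x) (simp add: qmul_def qone_def)

lemma hyp_mk: "mk p0 p1 p2 p3 \<in> hyperboloid a b \<longleftrightarrow> p0 > 0 \<and> p0^2 - a*p1^2 - b*p2^2 - a*b*p3^2 = 1"
  by (auto simp: hyperboloid_def mk_def qdag_def qtr_def qnrm_def complex_eq_iff power2_eq_square)

lemma key:
  fixes a b u0 u1 u2 u3 v0 v1 v2 v3 :: real
  assumes "a > 0" "b > 0" "u0 > 0" "v0 > 0"
    "u0^2 - a*u1^2 - b*u2^2 - a*b*u3^2 = 1" "v0^2 - a*v1^2 - b*v2^2 - a*b*v3^2 = 1"
  shows "u0*v0 - a*u1*v1 - b*u2*v2 - a*b*u3*v3 \<ge> 1"
    and "u0*v0 - a*u1*v1 - b*u2*v2 - a*b*u3*v3 = 1 \<Longrightarrow> u0 = v0 \<and> u1 = v1 \<and> u2 = v2 \<and> u3 = v3"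
proof -
  define s where "s = a*u1*v1 + b*u2*v2 + a*b*u3*v3"
  define U where "U = a*u1^2 + b*u2^2 + a*b*u3^2"
  define V where "V = a*v1^2 + b*v2^2 + a*b*v3^2"
  define L where "L = a*b*(u1*v2-u2*v1)^2 + a*a*b*(u1*v3-u3*v1)^2 + a*b*b*(u2*v3-u3*v2)^2"
  define D where "D = a*(u1-v1)^2 + b*(u2-v2)^2 + a*b*(u3-v3)^2"
  have ab: "a*b > 0" using assms by simp
  have L0: "L \<ge> 0" unfolding L_def using assms ab by (intro add_nonneg_nonneg mult_nonneg_nonneg) auto
  have D0: "D \<ge> 0" unfolding D_def using assms ab by (intro add_nonneg_nonneg mult_nonneg_nonneg) auto
  have lag: "U*V - s^2 = L" unfolding U_def V_def s_def L_def by (simp add: power2_eq_square algebra_simps)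
  have dd: "U + V - 2*s = D" unfolding U_def V_def s_def D_def by (simp add: power2_eq_square algebra_simps)
  have u: "u0^2 = 1 + U" using assms(5) unfolding U_def by simp
  have v: "v0^2 = 1 + V" using assms(6) unfolding V_def by simp
  have eq: "(u0*v0)^2 - (1+s)^2 = D + L"
    using u v lag dd by (simp add: power_mult_distrib algebra_simps power2_eq_square)
  have pos: "u0*v0 > 0" using assms by simp
  have ge: "u0*v0 \<ge> 1 + s"
  proof (rule ccontr)
    assume "\<not> ?thesis"
    then have "u0*v0 < 1 + s" by simp
    then have "(u0*v0)^2 < (1+s)^2" using pos by (intro power_strict_mono) auto
    then show False using eq D0 L0 by simp
  qed
  then show "u0*v0 - a*u1*v1 - b*u2*v2 - a*b*u3*v3 \<ge> 1" unfolding s_def by simp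
  assume "u0*v0 - a*u1*v1 - b*u2*v2 - a*b*u3*v3 = 1"
  then have "u0*v0 = 1 + s" unfolding s_def by simp
  then have "D + L = 0" using eq by simp
  then have "D = 0" using D0 L0 by simp
  then have "a*(u1-v1)^2 = 0 \<and> b*(u2-v2)^2 = 0 \<and> a*b*(u3-v3)^2 = 0"
    unfolding D_def using assms ab
    by (smt (verit) mult_nonneg_nonneg zero_le_power2)
  then have "u1 = v1" "u2 = v2" "u3 = v3" using assms by auto
  then have "U = V" unfolding U_def V_def by simp
  then have "u0^2 = v0^2" using u v by simp
  then have "u0 = v0" using assms by (simp add: power2_eq_iff)
  then show "u0 = v0 \<and> u1 = v1 \<and> u2 = v2 \<and> u3 = v3" using \<open>u1 = v1\<close> \<open>u2 = v2\<close> \<open>u3 = v3\<close> by simp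
qed


lemma arcosh_double: assumes "(w::real) \<ge> 1" shows "arcosh (2*w^2 - 1) = 2 * arcosh w"
proof -
  have "cosh (2 * arcosh w) = 2*w^2 - 1" using assms by (simp add: cosh_double_cosh)
  then have "arcosh (2*w^2-1) = arcosh (cosh (2 * arcosh w))" by simp
  also have "\<dots> = 2 * arcosh w" using assms by (intro arcosh_cosh_real) simp
  finally show ?thesis .
qed

theorem corollary5p3:
  fixes F :: "real set" and a b d :: real and \<Gamma> :: "quat set" and \<gamma> :: quat
  assumes "real_subfield F" and "a \<in> F" and "b \<in> F" and "d \<in> F"
    and "a > 0" and "b > 0" and "d > 0"
    and "\<Gamma> \<subseteq> quat_alg1 F a b d"
    and "\<gamma> \<in> \<Gamma>" and "\<gamma> \<in> hyperboloid a b"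
  shows "geod_segment a b qone (qact a b \<gamma> qone) \<inter> perp_bisector a b qone (qact a b \<gamma> qone) = {\<gamma>}
     \<and> (\<forall>p \<in> perp_bisector a b qone (qact a b \<gamma> qone). hdist a b qone \<gamma> \<le> hdist a b qone p)"
proof -
  note ab = \<open>a > 0\<close> \<open>b > 0\<close>
  define g0 where "g0 = Re (qw \<gamma>)"
  define g1 where "g1 = Re (qx \<gamma>)"
  define g2 where "g2 = Re (qy \<gamma>)"
  define g3 where "g3 = Im (qz \<gamma>)"
  have ge: "\<gamma> = mk g0 g1 g2 g3" and g0p: "g0 > 0" and gn: "g0^2 - a*g1^2 - b*g2^2 - a*b*g3^2 = 1"
    using hyp_rep[OF \<open>\<gamma> \<in> hyperboloid a b\<close>] unfolding g0_def g1_def g2_def g3_def by auto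
  have w1: "g0 \<ge> 1" using key(1)[OF ab zero_less_one g0p _ gn, of 0 0 0] by simp
  define Q where "Q = qact a b \<gamma> qone"
  have Qe: "Q = mk (2*g0^2 - 1) (2*g0*g1) (2*g0*g2) (2*g0*g3)"
  proof -
    have "Q = mk (g0^2 + a*g1^2 + b*g2^2 + a*b*g3^2) (2*g0*g1) (2*g0*g2) (2*g0*g3)"
      unfolding Q_def qact_def mul_one ge dag_mk sq_mk ..
    moreover have "g0^2 + a*g1^2 + b*g2^2 + a*b*g3^2 = 2*g0^2 - 1" using gn by simp
    ultimately show ?thesis by simp
  qed
  have Qn: "(2*g0^2 - 1)^2 - a*(2*g0*g1)^2 - b*(2*g0*g2)^2 - a*b*(2*g0*g3)^2 = 1"
  proof -
    have "a*(2*g0*g1)^2 + b*(2*g0*g2)^2 + a*b*(2*g0*g3)^2 = 4*g0^2*(a*g1^2 + b*g2^2 + a*b*g3^2)"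
      by (simp add: power_mult_distrib algebra_simps)
    also have "a*g1^2 + b*g2^2 + a*b*g3^2 = g0^2 - 1" using gn by simp
    finally show ?thesis by (simp add: power2_eq_square algebra_simps)
  qed
  have "g0^2 \<ge> 1" using w1 by (simp add: one_le_power)
  then have Q0p: "2*g0^2 - 1 > 0" by linarith
  have Qh: "Q \<in> hyperboloid a b" unfolding Qe hyp_mk using Q0p Qn by simp
  have d1g: "hdist a b qone \<gamma> = arcosh g0" unfolding hdist_def qone_mk ge form_mk by simp
  have dgQ: "hdist a b \<gamma> Q = arcosh g0"
  proof -
    have "Re (qform a b \<gamma> Q) = 2*g0*(g0^2 - a*g1^2 - b*g2^2 - a*b*g3^2) - g0"
      unfolding ge Qe form_mk by (simp add: power2_eq_square algebra_simps)
    then show ?thesis unfolding hdist_def using gn by simp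
  qed
  have d1Q: "hdist a b qone Q = 2 * arcosh g0"
    unfolding hdist_def qone_mk Qe form_mk using arcosh_double[OF w1] by simp
  have gen: "Re (qform a b qone p) = Re (qw p) \<and> Re (qform a b p qone) = Re (qw p) \<and>
      Re (qform a b p Q) = 2*g0*Re (qform a b p \<gamma>) - Re (qw p) \<and>
      Re (qform a b p \<gamma>) \<ge> 1 \<and> Re (qform a b p Q) \<ge> 1 \<and> Re (qw p) \<ge> 1 \<and>
      (Re (qform a b p \<gamma>) = 1 \<longrightarrow> p = \<gamma>)"
    if ph: "p \<in> hyperboloid a b" for p
  proof -
    define p0 where "p0 = Re (qw p)"
    define p1 where "p1 = Re (qx p)"
    define p2 where "p2 = Re (qy p)"
    define p3 where "p3 = Im (qz p)"
    have pe: "p = mk p0 p1 p2 p3" and p0p: "p0 > 0" and pn: "p0^2 - a*p1^2 - b*p2^2 - a*b*p3^2 = 1"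
      using hyp_rep[OF ph] unfolding p0_def p1_def p2_def p3_def by auto
    have k1: "p0*g0 - a*p1*g1 - b*p2*g2 - a*b*p3*g3 \<ge> 1" using key(1)[OF ab p0p g0p pn gn] .
    have k2: "p0*(2*g0^2-1) - a*p1*(2*g0*g1) - b*p2*(2*g0*g2) - a*b*p3*(2*g0*g3) \<ge> 1"
      using key(1)[OF ab p0p Q0p pn Qn] .
    have kp: "p0 \<ge> 1" using key(1)[OF ab p0p zero_less_one pn, of 0 0 0] by simp
    have k3: "p0*g0 - a*p1*g1 - b*p2*g2 - a*b*p3*g3 = 1 \<longrightarrow> p = \<gamma>"
      using key(2)[OF ab p0p g0p pn gn] pe ge by auto
    have e: "p0*(2*g0^2-1) - a*p1*(2*g0*g1) - b*p2*(2*g0*g2) - a*b*p3*(2*g0*g3)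
        = 2*g0*(p0*g0 - a*p1*g1 - b*p2*g2 - a*b*p3*g3) - p0"
      by (simp add: power2_eq_square algebra_simps)
    have f1: "Re (qform a b qone p) = p0" using pe by (simp add: qone_mk form_mk)
    have f2: "Re (qform a b p qone) = p0" using pe by (simp add: qone_mk form_mk)
    have f3: "Re (qform a b p \<gamma>) = p0*g0 - a*p1*g1 - b*p2*g2 - a*b*p3*g3"
      using pe ge by (simp add: form_mk)
    have f4: "Re (qform a b p Q) = p0*(2*g0^2-1) - a*p1*(2*g0*g1) - b*p2*(2*g0*g2) - a*b*p3*(2*g0*g3)"
      using pe Qe by (simp add: form_mk)
    show ?thesis using f1 f2 f3 f4 k1 k2 k3 kp e unfolding p0_def[symmetric] by simp
  qed
  have sym: "hdist a b p Q = hdist a b Q p" for p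
    unfolding hdist_def by (simp add: qform_def qmul_def qconj_def qtr_def algebra_simps)
  have part1: "geod_segment a b qone Q \<inter> perp_bisector a b qone Q = {\<gamma>}"
  proof
    show "{\<gamma>} \<subseteq> geod_segment a b qone Q \<inter> perp_bisector a b qone Q"
    proof -
      have "hdist a b \<gamma> qone = arcosh g0"
        using d1g unfolding hdist_def qone_mk ge form_mk by simp
      then show ?thesis using d1g dgQ d1Q \<open>\<gamma> \<in> hyperboloid a b\<close>
        by (auto simp: geod_segment_def perp_bisector_def)
    qed
  next
    show "geod_segment a b qone Q \<inter> perp_bisector a b qone Q \<subseteq> {\<gamma>}"
    proof
      fix p assume pin: "p \<in> geod_segment a b qone Q \<inter> perp_bisector a b qone Q"
      then have ph: "p \<in> hyperboloid a b"
        and s: "hdist a b qone p + hdist a b p Q = 2 * arcosh g0"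
        and eqd: "hdist a b p qone = hdist a b p Q"
        using d1Q by (auto simp: geod_segment_def perp_bisector_def)
      note G = gen[OF ph]
      have "hdist a b qone p = hdist a b p qone" unfolding hdist_def using G by simp
      then have h1: "hdist a b p qone = arcosh g0" and h2: "hdist a b p Q = arcosh g0"
        using s eqd by auto
      have c1: "Re (qw p) = g0"
      proof -
        have "cosh (hdist a b p qone) = Re (qw p)" unfolding hdist_def using G by simp
        then show ?thesis using h1 w1 by simp
      qed
      have c2: "Re (qform a b p Q) = g0"
      proof -
        have "cosh (hdist a b p Q) = Re (qform a b p Q)" unfolding hdist_def using G by simp
        then show ?thesis using h2 w1 by simp
      qed
      have "Re (qform a b p \<gamma>) = 1" using G c1 c2 g0p by simp
      then show "p \<in> {\<gamma>}" using G by simp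
    qed
  qed
  have part2: "\<forall>p \<in> perp_bisector a b qone Q. hdist a b qone \<gamma> \<le> hdist a b qone p"
  proof
    fix p assume "p \<in> perp_bisector a b qone Q"
    then have ph: "p \<in> hyperboloid a b" and eqd: "hdist a b p qone = hdist a b p Q"
      by (auto simp: perp_bisector_def)
    note G = gen[OF ph]
    have "Re (qw p) = Re (qform a b p Q)"
    proof -
      have "arcosh (Re (qw p)) = arcosh (Re (qform a b p Q))" using eqd G unfolding hdist_def by simp
      then have "cosh (arcosh (Re (qw p))) = cosh (arcosh (Re (qform a b p Q)))" by simp
      then show ?thesis using G by simp
    qed
    then have "Re (qw p) = g0 * Re (qform a b p \<gamma>)" using G by simp
    moreover have "g0 * Re (qform a b p \<gamma>) \<ge> g0" using G g0p by simp
    ultimately have "Re (qw p) \<ge> g0" by simp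
    then show "hdist a b qone \<gamma> \<le> hdist a b qone p"
      unfolding d1g using G w1 unfolding hdist_def
      by (simp add: not_less[symmetric])
  qed
  show ?thesis using part1 part2 unfolding Q_def by simp
qed

end
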